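(* Let $\varphi:K\to L$ be a strong covering. Then for every $F\in S_n(K)$ and $G\in S_n(L)$ with $\varphi(F)=G$, $$\bigl|\{\bar F\in S_{n+1}(K): F\subset\bar F\}\bigr|=\bigl|\{\bar G\in S_{n+1}(L): G\subset\bar G\}\bigr|.$$
   Context: $S_j(K)$ denotes the set of $j$-dimensional faces of a simplicial complex $K$. A simplicial map $\varphi:K\to L$ is a vertex map sending simplices to simplices. $\varphi$ is a covering map if $K$ is connected and for every simplex $G$ of $L$, $\varphi^{-1}(G)$ is a union of pairwise disjoint simplices $F_i$ of $K$ with $\varphi|_{F_i}:F_i\to G$ bijective for each $i$. A covering map $\varphi$ is a strong covering if for every $G\in S_n(L)$ that is a facet of some $\bar G\in S_{n+1}(L)$ and every $F\in\varphi^{-1}(G)$ there exists $\bar F\in S_{n+1}(K)$ with $F\subset\bar F$ and $\varphi(\bar F)=\bar G$. *)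

theory Defs
  imports Main "HOL-Library.Equipollence"
begin

definition simplicial_complex :: "'a set set \<Rightarrow> bool" where
  "simplicial_complex K \<longleftrightarrow>
     (\<forall>F\<in>K. finite F \<and> F \<noteq> {}) \<and>
     (\<forall>F\<in>K. \<forall>H. H \<subseteq> F \<and> H \<noteq> {} \<longrightarrow> H \<in> K)"

definition faces_dim :: "nat \<Rightarrow> 'a set set \<Rightarrow> 'a set set" where
  "faces_dim j K = {F \<in> K. card F = j + 1}"

definition sc_connected :: "'a set set \<Rightarrow> bool" where
  "sc_connected K \<longleftrightarrow> K \<noteq> {} \<and>
     (\<forall>u\<in>\<Union>K. \<forall>v\<in>\<Union>K. (u, v) \<in> {(x, y). {x, y} \<in> K}\<^sup>*)"

definition simplicial_map :: "('a \<Rightarrow> 'b) \<Rightarrow> 'a set set \<Rightarrow> 'b set set \<Rightarrow> bool" where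
  "simplicial_map \<phi> K L \<longleftrightarrow> simplicial_complex K \<and> simplicial_complex L \<and>
     (\<forall>F\<in>K. \<phi> ` F \<in> L)"

text \<open>Covering map: the preimage subcomplex of every simplex \<open>G\<close> of \<open>L\<close>
  (all faces of \<open>K\<close> mapped into \<open>G\<close>) is a union of pairwise disjoint simplices
  \<open>F_i\<close> of \<open>K\<close> (with all their faces), each mapped bijectively onto \<open>G\<close>.\<close>
definition covering_map :: "('a \<Rightarrow> 'b) \<Rightarrow> 'a set set \<Rightarrow> 'b set set \<Rightarrow> bool" where
  "covering_map \<phi> K L \<longleftrightarrow> simplicial_map \<phi> K L \<and> sc_connected K \<and>
     (\<forall>G\<in>L. \<exists>\<F>. \<F> \<subseteq> K \<and> pairwise disjnt \<F> \<and>
        (\<forall>F\<in>\<F>. bij_betw \<phi> F G) \<and>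
        {H \<in> K. \<phi> ` H \<subseteq> G} = {H. H \<noteq> {} \<and> (\<exists>F\<in>\<F>. H \<subseteq> F)})"

definition strong_covering :: "('a \<Rightarrow> 'b) \<Rightarrow> 'a set set \<Rightarrow> 'b set set \<Rightarrow> bool" where
  "strong_covering \<phi> K L \<longleftrightarrow> covering_map \<phi> K L \<and>
     (\<forall>n. \<forall>G\<in>faces_dim n L. \<forall>Gb\<in>faces_dim (Suc n) L. G \<subseteq> Gb \<longrightarrow>
        (\<forall>F\<in>K. \<phi> ` F = G \<longrightarrow>
           (\<exists>Fb\<in>faces_dim (Suc n) K. F \<subseteq> Fb \<and> \<phi> ` Fb = Gb)))"

end

theory Submission
  imports Defs
begin

lemma cov_sub:
  assumes cov: "covering_map \<phi> K L" and G': "G' \<in> L"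
    and H: "H1 \<in> K" "H2 \<in> K" "\<phi> ` H1 \<subseteq> G'" "\<phi> ` H2 \<subseteq> G'" "H1 \<inter> H2 \<noteq> {}"
  shows "\<exists>F'. H1 \<subseteq> F' \<and> H2 \<subseteq> F' \<and> inj_on \<phi> F'"
proof -
  obtain \<F> where Fs: "\<F> \<subseteq> K" "pairwise disjnt \<F>" "\<forall>F\<in>\<F>. bij_betw \<phi> F G'"
    "{H \<in> K. \<phi> ` H \<subseteq> G'} = {H. H \<noteq> {} \<and> (\<exists>F\<in>\<F>. H \<subseteq> F)}"
    using cov G' unfolding covering_map_def by blast
  have "H1 \<in> {H \<in> K. \<phi> ` H \<subseteq> G'}" "H2 \<in> {H \<in> K. \<phi> ` H \<subseteq> G'}" using H by auto
  then obtain F1 F2 where F12: "F1 \<in> \<F>" "H1 \<subseteq> F1" "F2 \<in> \<F>" "H2 \<subseteq> F2"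
    using Fs(4) by auto
  have "F1 \<inter> F2 \<noteq> {}" using F12 H(5) by blast
  hence "F1 = F2" using Fs(2) F12 unfolding pairwise_def disjnt_def by blast
  thus ?thesis using F12 Fs(3) bij_betw_def by metis
qed

lemma inj_face:
  assumes cov: "covering_map \<phi> K L" and H: "H \<in> K" "H \<noteq> {}"
  shows "inj_on \<phi> H"
proof -
  have "\<phi> ` H \<in> L" using cov H unfolding covering_map_def simplicial_map_def by blast
  from cov_sub[OF cov this H(1) H(1)] H(2) show ?thesis
    using inj_on_subset by fastforce
qed

theorem lemma3p3:
  fixes \<phi> :: "'a \<Rightarrow> 'b" and K :: "'a set set" and L :: "'b set set"
  assumes "strong_covering \<phi> K L"
    and "F \<in> faces_dim n K" and "G \<in> faces_dim n L" and "\<phi> ` F = G"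
  shows "{Fb \<in> faces_dim (Suc n) K. F \<subset> Fb} \<approx> {Gb \<in> faces_dim (Suc n) L. G \<subset> Gb}"
proof -
  have cov: "covering_map \<phi> K L" using assms(1) unfolding strong_covering_def by blast
  have sm: "\<forall>F\<in>K. \<phi> ` F \<in> L" using cov unfolding covering_map_def simplicial_map_def by blast
  have cF: "card F = n + 1" "F \<in> K" using assms(2) unfolding faces_dim_def by auto
  have cG: "card G = n + 1" using assms(3) unfolding faces_dim_def by auto
  have Fne: "F \<noteq> {}" using cF by auto
  have "bij_betw (image \<phi>) {Fb \<in> faces_dim (Suc n) K. F \<subset> Fb} {Gb \<in> faces_dim (Suc n) L. G \<subset> Gb}"
    unfolding bij_betw_def
  proof (intro conjI)
    show "inj_on (image \<phi>) {Fb \<in> faces_dim (Suc n) K. F \<subset> Fb}"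
    proof (rule inj_onI)
      fix X Y assume X: "X \<in> {Fb \<in> faces_dim (Suc n) K. F \<subset> Fb}"
        and Y: "Y \<in> {Fb \<in> faces_dim (Suc n) K. F \<subset> Fb}" and e: "\<phi> ` X = \<phi> ` Y"
      have XK: "X \<in> K" "Y \<in> K" using X Y unfolding faces_dim_def by auto
      have "X \<inter> Y \<noteq> {}" using X Y Fne by auto
      from cov_sub[OF cov sm[rule_format, OF XK(1)] XK(1) XK(2) _ _ this] e
      obtain F' where "X \<subseteq> F'" "Y \<subseteq> F'" "inj_on \<phi> F'" by auto
      thus "X = Y" using e by (metis inj_on_image_eq_iff)
    qed
  next
    show "image \<phi> ` {Fb \<in> faces_dim (Suc n) K. F \<subset> Fb} = {Gb \<in> faces_dim (Suc n) L. G \<subset> Gb}"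
    proof
      show "image \<phi> ` {Fb \<in> faces_dim (Suc n) K. F \<subset> Fb} \<subseteq> {Gb \<in> faces_dim (Suc n) L. G \<subset> Gb}"
      proof
        fix Z assume "Z \<in> image \<phi> ` {Fb \<in> faces_dim (Suc n) K. F \<subset> Fb}"
        then obtain X where X: "X \<in> K" "card X = Suc n + 1" "F \<subset> X" and Z: "Z = \<phi> ` X"
          unfolding faces_dim_def by auto
        have "X \<noteq> {}" using X by auto
        hence "inj_on \<phi> X" using inj_face[OF cov X(1)] by blast
        hence cZ: "card Z = Suc n + 1" using X Z card_image by metis
        have "G \<subseteq> Z" using assms(4) X Z by auto
        moreover have "G \<noteq> Z" using cZ cG by auto
        ultimately show "Z \<in> {Gb \<in> faces_dim (Suc n) L. G \<subset> Gb}"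
          using cZ sm X Z unfolding faces_dim_def by auto
      qed
    next
      show "{Gb \<in> faces_dim (Suc n) L. G \<subset> Gb} \<subseteq> image \<phi> ` {Fb \<in> faces_dim (Suc n) K. F \<subset> Fb}"
      proof
        fix Gb assume Gb: "Gb \<in> {Gb \<in> faces_dim (Suc n) L. G \<subset> Gb}"
        have sc: "\<forall>n. \<forall>G\<in>faces_dim n L. \<forall>Gb\<in>faces_dim (Suc n) L. G \<subseteq> Gb \<longrightarrow>
        (\<forall>F\<in>K. \<phi> ` F = G \<longrightarrow>
           (\<exists>Fb\<in>faces_dim (Suc n) K. F \<subseteq> Fb \<and> \<phi> ` Fb = Gb))"
          using assms(1) unfolding strong_covering_def by (rule conjunct2)
        have "Gb \<in> faces_dim (Suc n) L" "G \<subseteq> Gb" using Gb by auto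
        then obtain Fb where Fb: "Fb \<in> faces_dim (Suc n) K" "F \<subseteq> Fb" "\<phi> ` Fb = Gb"
          using sc[rule_format, OF assms(3) _ _ cF(2) assms(4)] by blast
        have "F \<noteq> Fb" using Fb(1) cF unfolding faces_dim_def by auto
        thus "Gb \<in> image \<phi> ` {Fb \<in> faces_dim (Suc n) K. F \<subset> Fb}" using Fb by blast
      qed
    qed
  qed
  thus ?thesis unfolding eqpoll_def by blast
qed

end
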